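(* Let $\mathcal{S}$ be a finite set of road segments and $y_1,\dots,y_N$ (collectively $y_{[N]}$) the routes of $N$ historical trips, each a nonempty set of distinct segments. For each $n$ and $s\in y_n$ one observes $T'_{n,s}=\theta_s+\varepsilon_{n,s}$, where the $\theta_s$ are i.i.d. with mean $\mu$ and variance $\tau^2>0$, independent of the errors; for each $n$ the errors $(\varepsilon_{n,s})_{s\in y_n}$ have mean $0$ and covariances $\sigma_{s,t}$; errors from different trips are independent. Fix a route $y$ and suppose $\sigma_{s,t}\ge0$ for all $s,t\in y$. Let $\hat\Theta^{\ast(\mathrm{seg})}_y$ be the optimal segment-based estimator, $\hat\Theta^{\ast(\mathrm{g\text{-}seg})}_y$ the optimal generalized segment-based estimator with the single super-segment partition $\mathscr{S}_y=\{y\}$, and $\hat\Theta^{\ast(\mathrm{route})}_y$ the optimal route-based estimator with neighborhood $\delta(y)=\{y_n:y_n=y\}$. Then for any set of historical routes, $$R\big(\hat\Theta^{\ast(\mathrm{seg})}_y\mid y_{[N]}\big)\le R\big(\hat\Theta^{\ast(\mathrm{g\text{-}seg})}_y\mid y_{[N]}\big)\le R\big(\hat\Theta^{\ast(\mathrm{route})}_y\mid y_{[N]}\big).$$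
   Context: Convention $0/0=0$. $N_s=|\{n:s\in y_n\}|$; for a set $S$ of segments $N_S=|\{n:S\subseteq y_n\}|$; $M_{\delta(y)}=\sum_n\mathbf 1\{y_n\in\delta(y)\}$. The integrated risk is $R(\hat\Theta_y\mid y_{[N]})=\mathbb{E}[(\hat\Theta_y-\sum_{s\in y}\theta_s)^2\mid y_{[N]}]$, expectation over errors and prior of $\theta$, conditional on the historical routes. Segment-based estimator: $\sum_{s\in y}[(1-\phi_s(N_s))\mu+\phi_s(N_s)\sum_{n:s\in y_n}T'_{n,s}/N_s]$, $\phi_s(0)=0$. Generalized segment-based estimator with partition $\mathscr{S}_y$ of $y$ into disjoint nonempty super-segments: $\sum_{S\in\mathscr{S}_y}[(1-\phi_S(N_S))|S|\mu+\phi_S(N_S)\sum_{n:S\subseteq y_n}\sum_{s\in S}T'_{n,s}/N_S]$, $\phi_S(0)=0$. Route-based estimator with neighborhood $\delta(y)$ (a set of historical routes): $(1-\phi_{\delta(y)}(M_{\delta(y)}))|y|\mu+\phi_{\delta(y)}(M_{\delta(y)})\sum_{n:y_n\in\delta(y)}\sum_{s\in y_n}T'_{n,s}/M_{\delta(y)}$, $\phi_{\delta(y)}(0)=0$. In each class, "optimal" means the weights are chosen to minimize the integrated risk. *)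

theory Defs
  imports "HOL-Probability.Probability"
begin

definition N_seg :: "nat \<Rightarrow> (nat \<Rightarrow> 'seg set) \<Rightarrow> 'seg \<Rightarrow> nat" where
  "N_seg N ys s = card {n. n < N \<and> s \<in> ys n}"

definition N_set :: "nat \<Rightarrow> (nat \<Rightarrow> 'seg set) \<Rightarrow> 'seg set \<Rightarrow> nat" where
  "N_set N ys S = card {n. n < N \<and> S \<subseteq> ys n}"

definition M_nbhd :: "nat \<Rightarrow> (nat \<Rightarrow> 'seg set) \<Rightarrow> 'seg set \<Rightarrow> nat" where
  "M_nbhd N ys y = card {n. n < N \<and> ys n = y}"

definition obs :: "('seg \<Rightarrow> 'a \<Rightarrow> real) \<Rightarrow> (nat \<Rightarrow> 'seg \<Rightarrow> 'a \<Rightarrow> real) \<Rightarrow> nat \<Rightarrow> 'seg \<Rightarrow> 'a \<Rightarrow> real" where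
  "obs \<theta> \<epsilon> n s \<omega> = \<theta> s \<omega> + \<epsilon> n s \<omega>"

definition travel_model ::
  "'a measure \<Rightarrow> 'seg set \<Rightarrow> nat \<Rightarrow> (nat \<Rightarrow> 'seg set) \<Rightarrow> ('seg \<Rightarrow> 'a \<Rightarrow> real)
   \<Rightarrow> (nat \<Rightarrow> 'seg \<Rightarrow> 'a \<Rightarrow> real) \<Rightarrow> real \<Rightarrow> real \<Rightarrow> ('seg \<Rightarrow> 'seg \<Rightarrow> real) \<Rightarrow> bool" where
  "travel_model M S N ys \<theta> \<epsilon> \<mu> \<tau> \<sigma> \<longleftrightarrow>
     prob_space M \<and> finite S \<and> \<tau> > 0 \<and>
     (\<forall>n<N. ys n \<noteq> {} \<and> ys n \<subseteq> S) \<and>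
     \<comment> \<open>theta_s: square integrable, identically distributed, mean mu, variance tau^2\<close>
     (\<forall>s\<in>S. \<theta> s \<in> borel_measurable M \<and> integrable M (\<lambda>\<omega>. (\<theta> s \<omega>)\<^sup>2)
        \<and> prob_space.expectation M (\<theta> s) = \<mu> \<and> prob_space.variance M (\<theta> s) = \<tau>\<^sup>2) \<and>
     (\<forall>s\<in>S. \<forall>t\<in>S. distr M borel (\<theta> s) = distr M borel (\<theta> t)) \<and>
     \<comment> \<open>errors: square integrable, mean zero, covariances sigma (same for every trip)\<close>
     (\<forall>n<N. \<forall>s\<in>ys n. \<epsilon> n s \<in> borel_measurable M \<and> integrable M (\<lambda>\<omega>. (\<epsilon> n s \<omega>)\<^sup>2)
        \<and> prob_space.expectation M (\<epsilon> n s) = 0) \<and>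
     (\<forall>n<N. \<forall>s\<in>ys n. \<forall>t\<in>ys n.
        prob_space.expectation M (\<lambda>\<omega>. \<epsilon> n s \<omega> * \<epsilon> n t \<omega>) = \<sigma> s t) \<and>
     \<comment> \<open>mutual independence: the theta_s (s in S) and the error vectors of the trips\<close>
     prob_space.indep_vars M
       (\<lambda>i. case i of Inl s \<Rightarrow> PiM {s} (\<lambda>_. borel) | Inr n \<Rightarrow> PiM (ys n) (\<lambda>_. borel))
       (\<lambda>i \<omega>. case i of Inl s \<Rightarrow> (\<lambda>t\<in>{s}. \<theta> t \<omega>) | Inr n \<Rightarrow> (\<lambda>t\<in>ys n. \<epsilon> n t \<omega>))
       (Inl ` S \<union> Inr ` {..<N})"

text \<open>Segment-based estimator with weights phi s (= phi_s(N_s)).\<close>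
definition seg_est :: "nat \<Rightarrow> (nat \<Rightarrow> 'seg set) \<Rightarrow> (nat \<Rightarrow> 'seg \<Rightarrow> 'a \<Rightarrow> real) \<Rightarrow> real
    \<Rightarrow> 'seg set \<Rightarrow> ('seg \<Rightarrow> real) \<Rightarrow> 'a \<Rightarrow> real" where
  "seg_est N ys T \<mu> y \<phi> \<omega> =
     (\<Sum>s\<in>y. (1 - \<phi> s) * \<mu> +
        \<phi> s * ((\<Sum>n\<in>{n. n < N \<and> s \<in> ys n}. T n s \<omega>) / real (N_seg N ys s)))"

definition gseg_est :: "nat \<Rightarrow> (nat \<Rightarrow> 'seg set) \<Rightarrow> (nat \<Rightarrow> 'seg \<Rightarrow> 'a \<Rightarrow> real) \<Rightarrow> real
    \<Rightarrow> 'seg set set \<Rightarrow> ('seg set \<Rightarrow> real) \<Rightarrow> 'a \<Rightarrow> real" where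
  "gseg_est N ys T \<mu> P \<phi> \<omega> =
     (\<Sum>S\<in>P. (1 - \<phi> S) * real (card S) * \<mu> +
        \<phi> S * ((\<Sum>n\<in>{n. n < N \<and> S \<subseteq> ys n}. \<Sum>s\<in>S. T n s \<omega>) / real (N_set N ys S)))"

definition route_est :: "nat \<Rightarrow> (nat \<Rightarrow> 'seg set) \<Rightarrow> (nat \<Rightarrow> 'seg \<Rightarrow> 'a \<Rightarrow> real) \<Rightarrow> real
    \<Rightarrow> 'seg set \<Rightarrow> 'seg set set \<Rightarrow> real \<Rightarrow> 'a \<Rightarrow> real" where
  "route_est N ys T \<mu> y \<delta> \<phi> \<omega> =
     (1 - \<phi>) * real (card y) * \<mu> +
     \<phi> * ((\<Sum>n\<in>{n. n < N \<and> ys n \<in> \<delta>}. \<Sum>s\<in>ys n. T n s \<omega>)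
            / real (card {n. n < N \<and> ys n \<in> \<delta>}))"

definition risk :: "'a measure \<Rightarrow> ('seg \<Rightarrow> 'a \<Rightarrow> real) \<Rightarrow> 'seg set \<Rightarrow> ('a \<Rightarrow> real) \<Rightarrow> real" where
  "risk M \<theta> y \<Theta> = (\<integral>\<omega>. (\<Theta> \<omega> - (\<Sum>s\<in>y. \<theta> s \<omega>))\<^sup>2 \<partial>M)"

definition opt_seg_risk where
  "opt_seg_risk M \<theta> \<epsilon> \<mu> N ys y =
     Inf {risk M \<theta> y (seg_est N ys (obs \<theta> \<epsilon>) \<mu> y \<phi>) | \<phi>.
            \<forall>s\<in>y. N_seg N ys s = 0 \<longrightarrow> \<phi> s = 0}"

definition opt_gseg_risk where
  "opt_gseg_risk M \<theta> \<epsilon> \<mu> N ys y P =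
     Inf {risk M \<theta> y (gseg_est N ys (obs \<theta> \<epsilon>) \<mu> P \<phi>) | \<phi>.
            \<forall>S\<in>P. N_set N ys S = 0 \<longrightarrow> \<phi> S = 0}"

definition opt_route_risk where
  "opt_route_risk M \<theta> \<epsilon> \<mu> N ys y \<delta> =
     Inf {risk M \<theta> y (route_est N ys (obs \<theta> \<epsilon>) \<mu> y \<delta> \<phi>) | \<phi>.
            card {n. n < N \<and> ys n \<in> \<delta>} = 0 \<longrightarrow> \<phi> = 0}"

end

theory Submission
  imports Defs
begin


lemma pair_indep_integral:
  fixes X :: "'i \<Rightarrow> 'a \<Rightarrow> 'b" and gi gj :: "'b \<Rightarrow> real"
  assumes P: "prob_space M" and ind: "prob_space.indep_vars M M' X I"
    and ij: "i \<in> I" "j \<in> I" "i \<noteq> j"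
    and mi: "gi \<in> measurable (M' i) borel" and mj: "gj \<in> measurable (M' j) borel"
    and ii: "integrable M (\<lambda>\<omega>. gi (X i \<omega>))" and ij2: "integrable M (\<lambda>\<omega>. gj (X j \<omega>))"
  shows "(\<integral>\<omega>. gi (X i \<omega>) * gj (X j \<omega>) \<partial>M) = (\<integral>\<omega>. gi (X i \<omega>) \<partial>M) * (\<integral>\<omega>. gj (X j \<omega>) \<partial>M)"
proof -
  interpret prob_space M by (rule P)
  define g where "g k = (if k = i then gi else gj)" for k
  have s: "indep_vars M' X {i, j}" by (rule indep_vars_subset[OF ind]) (use ij in blast)
  have gm: "g k \<in> measurable (M' k) borel" if "k \<in> {i,j}" for k
  proof (cases "k = i")
    case True then show ?thesis using mi by (simp add: g_def)
  next
    case False then have "k = j" using that by blast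
    then show ?thesis using mj False by (simp add: g_def)
  qed
  have gi': "g i = gi" and gj': "g j = gj" using ij(3) by (simp_all add: g_def)
  have c: "indep_vars (\<lambda>_. borel) (\<lambda>k x. g k (X k x)) {i, j}"
    by (rule indep_vars_compose2[OF s gm])
  have gint: "integrable M (\<lambda>x. g k (X k x))" if "k \<in> {i,j}" for k
  proof (cases "k = i")
    case True then show ?thesis using ii gi' by simp
  next
    case False then have "k = j" using that by blast
    then show ?thesis using ij2 gj' by simp
  qed
  have "(\<integral>\<omega>. (\<Prod>k\<in>{i,j}. g k (X k \<omega>)) \<partial>M) = (\<Prod>k\<in>{i,j}. \<integral>\<omega>. g k (X k \<omega>) \<partial>M)"
    by (rule indep_vars_lebesgue_integral[OF _ c gint]) simp
  then show ?thesis using ij(3) by (simp add: gi' gj')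
qed


definition L2 :: "'a measure \<Rightarrow> ('a \<Rightarrow> real) \<Rightarrow> bool" where
  "L2 M f \<longleftrightarrow> f \<in> borel_measurable M \<and> integrable M (\<lambda>\<omega>. (f \<omega>)\<^sup>2)"

lemma L2_mult: assumes "L2 M f" "L2 M g" shows "integrable M (\<lambda>\<omega>. f \<omega> * g \<omega>)"
proof (rule Bochner_Integration.integrable_bound[where f="\<lambda>\<omega>. (f \<omega>)\<^sup>2 + (g \<omega>)\<^sup>2"])
  show "integrable M (\<lambda>\<omega>. (f \<omega>)\<^sup>2 + (g \<omega>)\<^sup>2)" using assms by (auto simp: L2_def)
  show "(\<lambda>\<omega>. f \<omega> * g \<omega>) \<in> borel_measurable M" using assms by (auto simp: L2_def)
  show "AE x in M. norm (f x * g x) \<le> norm ((f x)\<^sup>2 + (g x)\<^sup>2)"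
  proof (rule AE_I2)
    fix x
    have e: "(\<bar>f x\<bar> - \<bar>g x\<bar>)\<^sup>2 = (f x)\<^sup>2 + (g x)\<^sup>2 - 2 * (\<bar>f x\<bar> * \<bar>g x\<bar>)"
      by (simp add: power2_eq_square algebra_simps abs_mult_self_eq)
    have "0 \<le> (\<bar>f x\<bar> - \<bar>g x\<bar>)\<^sup>2" by simp
    then have "2 * (\<bar>f x\<bar> * \<bar>g x\<bar>) \<le> (f x)\<^sup>2 + (g x)\<^sup>2" unfolding e by linarith
    moreover have "0 \<le> \<bar>f x\<bar> * \<bar>g x\<bar>" by simp
    ultimately have "\<bar>f x * g x\<bar> \<le> (f x)\<^sup>2 + (g x)\<^sup>2" unfolding abs_mult by linarith
    then show "norm (f x * g x) \<le> norm ((f x)\<^sup>2 + (g x)\<^sup>2)" by simp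
  qed
qed

lemma L2_add: assumes "L2 M f" "L2 M g" shows "L2 M (\<lambda>\<omega>. f \<omega> + g \<omega>)"
proof -
  have "integrable M (\<lambda>\<omega>. (f \<omega>)\<^sup>2 + (g \<omega>)\<^sup>2 + 2 * (f \<omega> * g \<omega>))"
    using assms L2_mult[OF assms] by (auto simp: L2_def)
  moreover have "(\<lambda>\<omega>. (f \<omega> + g \<omega>)\<^sup>2) = (\<lambda>\<omega>. (f \<omega>)\<^sup>2 + (g \<omega>)\<^sup>2 + 2 * (f \<omega> * g \<omega>))"
    by (auto simp: power2_eq_square algebra_simps)
  ultimately show ?thesis using assms by (auto simp: L2_def)
qed

lemma L2_cmult: assumes "L2 M f" shows "L2 M (\<lambda>\<omega>. c * f \<omega>)"
proof -
  have "(\<lambda>\<omega>. (c * f \<omega>)\<^sup>2) = (\<lambda>\<omega>. c\<^sup>2 * (f \<omega>)\<^sup>2)" by (auto simp: power_mult_distrib)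
  then show ?thesis using assms by (auto simp: L2_def)
qed

lemma L2_const: assumes "finite_measure M" shows "L2 M (\<lambda>\<omega>. c)"
  using assms by (auto simp: L2_def finite_measure.integrable_const)

lemma L2_sum: assumes "finite_measure M" "\<And>i. i \<in> I \<Longrightarrow> L2 M (f i)" shows "L2 M (\<lambda>\<omega>. \<Sum>i\<in>I. f i \<omega>)"
  using assms(2)
proof (induction I rule: infinite_finite_induct)
  case (infinite A) then show ?case using L2_const[OF assms(1), of 0] by simp
next
  case empty then show ?case using L2_const[OF assms(1), of 0] by simp
next
  case (insert x F) then show ?case by (simp add: L2_add)
qed

lemma L2_integrable: assumes "finite_measure M" "L2 M f" shows "integrable M f"
  using L2_mult[OF assms(2) L2_const[OF assms(1), of 1]] by simp



locale tm =
  fixes M :: "'a measure" and S :: "'seg set" and N :: nat and ys :: "nat \<Rightarrow> 'seg set"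
    and \<theta> :: "'seg \<Rightarrow> 'a \<Rightarrow> real" and \<epsilon> :: "nat \<Rightarrow> 'seg \<Rightarrow> 'a \<Rightarrow> real"
    and \<mu> \<tau> :: real and \<sigma> :: "'seg \<Rightarrow> 'seg \<Rightarrow> real"
  assumes model: "travel_model M S N ys \<theta> \<epsilon> \<mu> \<tau> \<sigma>"
begin

lemma PS: "prob_space M" using model by (simp add: travel_model_def)

sublocale prob_space M by (rule PS)

lemma finS: "finite S" and tau_pos: "\<tau> > 0" and ysS: "n < N \<Longrightarrow> ys n \<subseteq> S"
  using model by (auto simp: travel_model_def)

lemma th_L2: "s \<in> S \<Longrightarrow> L2 M (\<theta> s)"
  using model by (auto simp: travel_model_def L2_def)

lemma th_int: "s \<in> S \<Longrightarrow> integrable M (\<theta> s)"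
  using th_L2 L2_integrable finite_measure_axioms by blast

lemma th_mean: "s \<in> S \<Longrightarrow> (\<integral>\<omega>. \<theta> s \<omega> \<partial>M) = \<mu>"
  using model by (auto simp: travel_model_def)

lemma th_var: "s \<in> S \<Longrightarrow> (\<integral>\<omega>. (\<theta> s \<omega> - \<mu>)\<^sup>2 \<partial>M) = \<tau>\<^sup>2"
  using model by (auto simp: travel_model_def)

lemma th0_L2: "s \<in> S \<Longrightarrow> L2 M (\<lambda>\<omega>. \<theta> s \<omega> - \<mu>)"
  using L2_add[OF th_L2 L2_const[OF finite_measure_axioms, of "-\<mu>"]] by simp

lemma th0_mean: "s \<in> S \<Longrightarrow> (\<integral>\<omega>. \<theta> s \<omega> - \<mu> \<partial>M) = 0"
  using th_int th_mean by (simp add: prob_space)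

lemma ep_L2: "n < N \<Longrightarrow> s \<in> ys n \<Longrightarrow> L2 M (\<epsilon> n s)"
  using model by (auto simp: travel_model_def L2_def)

lemma ep_int: "n < N \<Longrightarrow> s \<in> ys n \<Longrightarrow> integrable M (\<epsilon> n s)"
  using ep_L2 L2_integrable finite_measure_axioms by blast

lemma ep_mean: "n < N \<Longrightarrow> s \<in> ys n \<Longrightarrow> (\<integral>\<omega>. \<epsilon> n s \<omega> \<partial>M) = 0"
  using model by (auto simp: travel_model_def)

lemma ep_cov: "n < N \<Longrightarrow> s \<in> ys n \<Longrightarrow> t \<in> ys n \<Longrightarrow> (\<integral>\<omega>. \<epsilon> n s \<omega> * \<epsilon> n t \<omega> \<partial>M) = \<sigma> s t"
  using model by (auto simp: travel_model_def)

definition MM :: "'seg + nat \<Rightarrow> ('seg \<Rightarrow> real) measure" where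
  "MM = (\<lambda>i. case i of Inl s \<Rightarrow> PiM {s} (\<lambda>_. borel) | Inr n \<Rightarrow> PiM (ys n) (\<lambda>_. borel))"
definition XX :: "'seg + nat \<Rightarrow> 'a \<Rightarrow> ('seg \<Rightarrow> real)" where
  "XX = (\<lambda>i \<omega>. case i of Inl s \<Rightarrow> (\<lambda>t\<in>{s}. \<theta> t \<omega>) | Inr n \<Rightarrow> (\<lambda>t\<in>ys n. \<epsilon> n t \<omega>))"

lemma ind: "indep_vars MM XX (Inl ` S \<union> Inr ` {..<N})"
  using model unfolding travel_model_def MM_def XX_def by blast

lemma meas_th: "(\<lambda>x. x s - \<mu>) \<in> measurable (MM (Inl s)) borel"
  unfolding MM_def by simp measurable

lemma meas_ep: "t \<in> ys n \<Longrightarrow> (\<lambda>x. x t) \<in> measurable (MM (Inr n)) borel"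
  unfolding MM_def by simp measurable

lemma F1: assumes "s \<in> S" "t \<in> S"
  shows "(\<integral>\<omega>. (\<theta> s \<omega> - \<mu>) * (\<theta> t \<omega> - \<mu>) \<partial>M) = (if s = t then \<tau>\<^sup>2 else 0)"
proof (cases "s = t")
  case True then show ?thesis using th_var[OF assms(1)] by (simp add: power2_eq_square)
next
  case False
  have "(\<integral>\<omega>. (\<lambda>x. x s - \<mu>) (XX (Inl s) \<omega>) * (\<lambda>x. x t - \<mu>) (XX (Inl t) \<omega>) \<partial>M)
     = (\<integral>\<omega>. (\<lambda>x. x s - \<mu>) (XX (Inl s) \<omega>) \<partial>M) * (\<integral>\<omega>. (\<lambda>x. x t - \<mu>) (XX (Inl t) \<omega>) \<partial>M)"
    by (rule pair_indep_integral[OF PS ind _ _ _ meas_th meas_th])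
       (use assms False th0_L2 L2_integrable[OF finite_measure_axioms] in \<open>auto simp: XX_def\<close>)
  then show ?thesis using False assms th0_mean by (simp add: XX_def)
qed

lemma F2: assumes "s \<in> S" "n < N" "t \<in> ys n"
  shows "(\<integral>\<omega>. (\<theta> s \<omega> - \<mu>) * \<epsilon> n t \<omega> \<partial>M) = 0"
proof -
  have "(\<integral>\<omega>. (\<lambda>x. x s - \<mu>) (XX (Inl s) \<omega>) * (\<lambda>x. x t) (XX (Inr n) \<omega>) \<partial>M)
     = (\<integral>\<omega>. (\<lambda>x. x s - \<mu>) (XX (Inl s) \<omega>) \<partial>M) * (\<integral>\<omega>. (\<lambda>x. x t) (XX (Inr n) \<omega>) \<partial>M)"
    by (rule pair_indep_integral[OF PS ind _ _ _ meas_th meas_ep[OF assms(3)]])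
       (use assms th0_L2 ep_int L2_integrable[OF finite_measure_axioms] in \<open>auto simp: XX_def\<close>)
  then show ?thesis using assms th0_mean by (simp add: XX_def)
qed

lemma F3: assumes "n < N" "m < N" "s \<in> ys n" "t \<in> ys m"
  shows "(\<integral>\<omega>. \<epsilon> n s \<omega> * \<epsilon> m t \<omega> \<partial>M) = (if n = m then \<sigma> s t else 0)"
proof (cases "n = m")
  case True then show ?thesis using ep_cov assms by simp
next
  case False
  have "(\<integral>\<omega>. (\<lambda>x. x s) (XX (Inr n) \<omega>) * (\<lambda>x. x t) (XX (Inr m) \<omega>) \<partial>M)
     = (\<integral>\<omega>. (\<lambda>x. x s) (XX (Inr n) \<omega>) \<partial>M) * (\<integral>\<omega>. (\<lambda>x. x t) (XX (Inr m) \<omega>) \<partial>M)"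
    by (rule pair_indep_integral[OF PS ind _ _ _ meas_ep[OF assms(3)] meas_ep[OF assms(4)]])
       (use assms False ep_int in \<open>auto simp: XX_def\<close>)
  then show ?thesis using False assms ep_mean by (simp add: XX_def)
qed

end


lemma lin4:
  fixes f1 f2 f3 f4 :: "'a \<Rightarrow> real"
  assumes "integrable M f1" "integrable M f2" "integrable M f3" "integrable M f4"
  shows "(\<integral>\<omega>. a1 * f1 \<omega> + a2 * f2 \<omega> + a3 * f3 \<omega> + a4 * f4 \<omega> \<partial>M)
    = a1 * (\<integral>\<omega>. f1 \<omega> \<partial>M) + a2 * (\<integral>\<omega>. f2 \<omega> \<partial>M) + a3 * (\<integral>\<omega>. f3 \<omega> \<partial>M) + a4 * (\<integral>\<omega>. f4 \<omega> \<partial>M)"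
proof -
  have j1: "integrable M (\<lambda>\<omega>. a1 * f1 \<omega>)" "integrable M (\<lambda>\<omega>. a2 * f2 \<omega>)"
    "integrable M (\<lambda>\<omega>. a3 * f3 \<omega>)" "integrable M (\<lambda>\<omega>. a4 * f4 \<omega>)"
    using assms by (simp_all only: integrable_mult_right)
  have j2: "integrable M (\<lambda>\<omega>. a1 * f1 \<omega> + a2 * f2 \<omega>)" by (rule Bochner_Integration.integrable_add[OF j1(1,2)])
  have j3: "integrable M (\<lambda>\<omega>. a1 * f1 \<omega> + a2 * f2 \<omega> + a3 * f3 \<omega>)" by (rule Bochner_Integration.integrable_add[OF j2 j1(3)])
  show ?thesis
    by (simp only: Bochner_Integration.integral_add[OF j3 j1(4)] Bochner_Integration.integral_add[OF j2 j1(3)]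
        Bochner_Integration.integral_add[OF j1(1,2)] integral_mult_right_zero)
qed

context tm begin

lemma I_th_e: assumes "s \<in> S" "finite B" "\<forall>n\<in>B. n < N \<and> t \<in> ys n"
  shows "(\<integral>\<omega>. (\<theta> s \<omega> - \<mu>) * (\<Sum>n\<in>B. \<epsilon> n t \<omega>) \<partial>M) = 0"
proof -
  have int: "integrable M (\<lambda>\<omega>. (\<theta> s \<omega> - \<mu>) * \<epsilon> n t \<omega>)" if "n \<in> B" for n
  proof -
    have "n < N" "t \<in> ys n" using assms(3) that by blast+
    then show ?thesis by (rule L2_mult[OF th0_L2[OF assms(1)] ep_L2])
  qed
  have z: "(\<integral>\<omega>. (\<theta> s \<omega> - \<mu>) * \<epsilon> n t \<omega> \<partial>M) = 0" if "n \<in> B" for n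
  proof -
    have "n < N" "t \<in> ys n" using assms(3) that by blast+
    then show ?thesis by (rule F2[OF assms(1)])
  qed
  have "(\<integral>\<omega>. (\<theta> s \<omega> - \<mu>) * (\<Sum>n\<in>B. \<epsilon> n t \<omega>) \<partial>M) = (\<integral>\<omega>. (\<Sum>n\<in>B. (\<theta> s \<omega> - \<mu>) * \<epsilon> n t \<omega>) \<partial>M)"
    by (simp only: sum_distrib_left)
  also have "\<dots> = (\<Sum>n\<in>B. (\<integral>\<omega>. (\<theta> s \<omega> - \<mu>) * \<epsilon> n t \<omega> \<partial>M))"
    by (rule Bochner_Integration.integral_sum) (rule int)
  also have "\<dots> = 0" by (rule sum.neutral) (use z in blast)
  finally show ?thesis .
qed

lemma I_e_e: assumes "finite B" "finite C" "\<forall>n\<in>B. n < N \<and> s \<in> ys n" "\<forall>n\<in>C. n < N \<and> t \<in> ys n"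
  shows "(\<integral>\<omega>. (\<Sum>n\<in>B. \<epsilon> n s \<omega>) * (\<Sum>m\<in>C. \<epsilon> m t \<omega>) \<partial>M) = real (card (B \<inter> C)) * \<sigma> s t"
proof -
  have int: "integrable M (\<lambda>\<omega>. \<epsilon> n s \<omega> * \<epsilon> m t \<omega>)" if "n \<in> B" "m \<in> C" for n m
  proof -
    have "n < N" "s \<in> ys n" "m < N" "t \<in> ys m" using assms(3,4) that by blast+
    then show ?thesis by (intro L2_mult ep_L2)
  qed
  have v: "(\<integral>\<omega>. \<epsilon> n s \<omega> * \<epsilon> m t \<omega> \<partial>M) = (if n = m then \<sigma> s t else 0)" if "n \<in> B" "m \<in> C" for n m
  proof -
    have "n < N" "m < N" "s \<in> ys n" "t \<in> ys m" using assms(3,4) that by blast+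
    then show ?thesis by (rule F3)
  qed
  have "(\<integral>\<omega>. (\<Sum>n\<in>B. \<epsilon> n s \<omega>) * (\<Sum>m\<in>C. \<epsilon> m t \<omega>) \<partial>M) = (\<integral>\<omega>. (\<Sum>n\<in>B. \<Sum>m\<in>C. \<epsilon> n s \<omega> * \<epsilon> m t \<omega>) \<partial>M)"
    by (simp only: sum_product)
  also have "\<dots> = (\<Sum>n\<in>B. (\<integral>\<omega>. (\<Sum>m\<in>C. \<epsilon> n s \<omega> * \<epsilon> m t \<omega>) \<partial>M))"
    by (rule Bochner_Integration.integral_sum, rule Bochner_Integration.integrable_sum, rule int)
  also have "\<dots> = (\<Sum>n\<in>B. \<Sum>m\<in>C. (\<integral>\<omega>. \<epsilon> n s \<omega> * \<epsilon> m t \<omega> \<partial>M))"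
    by (rule sum.cong[OF refl], rule Bochner_Integration.integral_sum, rule int)
  also have "\<dots> = (\<Sum>n\<in>B. \<Sum>m\<in>C. (if n = m then \<sigma> s t else 0))"
    by (rule sum.cong[OF refl], rule sum.cong[OF refl], rule v)
  also have "\<dots> = (\<Sum>n\<in>B. (if n \<in> C then \<sigma> s t else 0))"
    by (rule sum.cong[OF refl]) (simp only: sum.delta[OF assms(2)] sum.delta'[OF assms(2)])
  also have "\<dots> = real (card (B \<inter> C)) * \<sigma> s t"
    using assms(1) by (simp add: sum.If_cases Int_def)
  finally show ?thesis .
qed

lemma risk_formula:
  assumes yS: "y \<subseteq> S" and A: "\<forall>s\<in>y. A s \<subseteq> {n. n < N \<and> s \<in> ys n}"
  shows "risk M \<theta> y (\<lambda>\<omega>. \<Sum>s\<in>y. (1 - \<phi> s) * \<mu> + \<phi> s * \<theta> s \<omega> + c s * (\<Sum>n\<in>A s. \<epsilon> n s \<omega>))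
    = (\<Sum>s\<in>y. (1 - \<phi> s)\<^sup>2 * \<tau>\<^sup>2) + (\<Sum>s\<in>y. \<Sum>t\<in>y. c s * c t * real (card (A s \<inter> A t)) * \<sigma> s t)"
proof -
  have fy: "finite y" using yS finS finite_subset by blast
  have fA: "finite (A s)" if "s \<in> y" for s
  proof (rule finite_subset)
    show "A s \<subseteq> {..<N}" using A that by blast
  qed simp
  have Ap: "n < N" "s \<in> ys n" if "s \<in> y" "n \<in> A s" for s n using A that by blast+
  define e where "e s \<omega> = (\<Sum>n\<in>A s. \<epsilon> n s \<omega>)" for s \<omega>
  define u where "u s \<omega> = (\<phi> s - 1) * (\<theta> s \<omega> - \<mu>) + c s * e s \<omega>" for s \<omega>
  have eL2: "L2 M (e s)" if "s \<in> y" for s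
    unfolding e_def
  proof (rule L2_sum[OF finite_measure_axioms])
    fix n assume "n \<in> A s"
    then show "L2 M (\<epsilon> n s)" using Ap[OF that] ep_L2 by blast
  qed
  have uL2: "L2 M (u s)" if "s \<in> y" for s
  proof -
    have sS: "s \<in> S" using yS that by blast
    show ?thesis unfolding u_def
      by (rule L2_add[OF L2_cmult[OF th0_L2[OF sS]] L2_cmult[OF eL2[OF that]]])
  qed
  have uu: "integrable M (\<lambda>\<omega>. u s \<omega> * u t \<omega>)" if "s \<in> y" "t \<in> y" for s t
    by (rule L2_mult[OF uL2[OF that(1)] uL2[OF that(2)]])
  have diff: "(\<Sum>s\<in>y. (1 - \<phi> s) * \<mu> + \<phi> s * \<theta> s \<omega> + c s * (\<Sum>n\<in>A s. \<epsilon> n s \<omega>)) - (\<Sum>s\<in>y. \<theta> s \<omega>)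
      = (\<Sum>s\<in>y. u s \<omega>)" for \<omega>
  proof -
    have "(1 - \<phi> s) * \<mu> + \<phi> s * \<theta> s \<omega> + c s * (\<Sum>n\<in>A s. \<epsilon> n s \<omega>) - \<theta> s \<omega> = u s \<omega>" for s
      unfolding u_def e_def by (simp add: algebra_simps)
    then show ?thesis by (simp only: sum_subtractf[symmetric])
  qed
  have sq: "(\<Sum>s\<in>y. u s \<omega>)\<^sup>2 = (\<Sum>s\<in>y. \<Sum>t\<in>y. u s \<omega> * u t \<omega>)" for \<omega>
    by (simp only: power2_eq_square sum_product)
  have "risk M \<theta> y (\<lambda>\<omega>. \<Sum>s\<in>y. (1 - \<phi> s) * \<mu> + \<phi> s * \<theta> s \<omega> + c s * (\<Sum>n\<in>A s. \<epsilon> n s \<omega>))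
     = (\<integral>\<omega>. (\<Sum>s\<in>y. \<Sum>t\<in>y. u s \<omega> * u t \<omega>) \<partial>M)"
    unfolding risk_def diff sq ..
  also have "\<dots> = (\<Sum>s\<in>y. (\<integral>\<omega>. (\<Sum>t\<in>y. u s \<omega> * u t \<omega>) \<partial>M))"
    by (rule Bochner_Integration.integral_sum, rule Bochner_Integration.integrable_sum, rule uu)
  also have "\<dots> = (\<Sum>s\<in>y. \<Sum>t\<in>y. (\<integral>\<omega>. u s \<omega> * u t \<omega> \<partial>M))"
    by (rule sum.cong[OF refl], rule Bochner_Integration.integral_sum, rule uu)
  also have "\<dots> = (\<Sum>s\<in>y. \<Sum>t\<in>y. (\<phi> s - 1) * (\<phi> t - 1) * (if s = t then \<tau>\<^sup>2 else 0)
                        + c s * c t * real (card (A s \<inter> A t)) * \<sigma> s t)"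
  proof (rule sum.cong[OF refl], rule sum.cong[OF refl])
    fix s t assume st: "s \<in> y" "t \<in> y"
    then have sS: "s \<in> S" "t \<in> S" using yS by auto
    have i1: "integrable M (\<lambda>\<omega>. (\<theta> s \<omega> - \<mu>) * (\<theta> t \<omega> - \<mu>))"
      by (rule L2_mult[OF th0_L2[OF sS(1)] th0_L2[OF sS(2)]])
    have i2: "integrable M (\<lambda>\<omega>. (\<theta> s \<omega> - \<mu>) * e t \<omega>)"
      by (rule L2_mult[OF th0_L2[OF sS(1)] eL2[OF st(2)]])
    have i3: "integrable M (\<lambda>\<omega>. (\<theta> t \<omega> - \<mu>) * e s \<omega>)"
      by (rule L2_mult[OF th0_L2[OF sS(2)] eL2[OF st(1)]])
    have i4: "integrable M (\<lambda>\<omega>. e s \<omega> * e t \<omega>)"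
      by (rule L2_mult[OF eL2[OF st(1)] eL2[OF st(2)]])
    have ex: "(\<lambda>\<omega>. u s \<omega> * u t \<omega>) = (\<lambda>\<omega>. ((\<phi> s - 1) * (\<phi> t - 1)) * ((\<theta> s \<omega> - \<mu>) * (\<theta> t \<omega> - \<mu>))
       + ((\<phi> s - 1) * c t) * ((\<theta> s \<omega> - \<mu>) * e t \<omega>) + (c s * (\<phi> t - 1)) * ((\<theta> t \<omega> - \<mu>) * e s \<omega>)
       + (c s * c t) * (e s \<omega> * e t \<omega>))"
      unfolding u_def by (rule ext) (simp add: algebra_simps)
    have v1: "(\<integral>\<omega>. (\<theta> s \<omega> - \<mu>) * (\<theta> t \<omega> - \<mu>) \<partial>M) = (if s = t then \<tau>\<^sup>2 else 0)"
      by (rule F1[OF sS])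
    have v2: "(\<integral>\<omega>. (\<theta> s \<omega> - \<mu>) * e t \<omega> \<partial>M) = 0"
      unfolding e_def by (rule I_th_e[OF sS(1) fA[OF st(2)]]) (use Ap[OF st(2)] in blast)
    have v3: "(\<integral>\<omega>. (\<theta> t \<omega> - \<mu>) * e s \<omega> \<partial>M) = 0"
      unfolding e_def by (rule I_th_e[OF sS(2) fA[OF st(1)]]) (use Ap[OF st(1)] in blast)
    have v4: "(\<integral>\<omega>. e s \<omega> * e t \<omega> \<partial>M) = real (card (A s \<inter> A t)) * \<sigma> s t"
      unfolding e_def by (rule I_e_e[OF fA[OF st(1)] fA[OF st(2)]]) (use Ap[OF st(1)] Ap[OF st(2)] in blast)+
    have "(\<integral>\<omega>. u s \<omega> * u t \<omega> \<partial>M) = ((\<phi> s - 1) * (\<phi> t - 1)) * (\<integral>\<omega>. (\<theta> s \<omega> - \<mu>) * (\<theta> t \<omega> - \<mu>) \<partial>M)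
       + ((\<phi> s - 1) * c t) * (\<integral>\<omega>. (\<theta> s \<omega> - \<mu>) * e t \<omega> \<partial>M) + (c s * (\<phi> t - 1)) * (\<integral>\<omega>. (\<theta> t \<omega> - \<mu>) * e s \<omega> \<partial>M)
       + (c s * c t) * (\<integral>\<omega>. e s \<omega> * e t \<omega> \<partial>M)"
      unfolding ex by (rule lin4[OF i1 i2 i3 i4])
    also have "\<dots> = (\<phi> s - 1) * (\<phi> t - 1) * (if s = t then \<tau>\<^sup>2 else 0)
                        + c s * c t * real (card (A s \<inter> A t)) * \<sigma> s t"
      unfolding v1 v2 v3 v4 by (simp only: mult_zero_right add_0_right mult.assoc)
    finally show "(\<integral>\<omega>. u s \<omega> * u t \<omega> \<partial>M) = (\<phi> s - 1) * (\<phi> t - 1) * (if s = t then \<tau>\<^sup>2 else 0)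
                        + c s * c t * real (card (A s \<inter> A t)) * \<sigma> s t" .
  qed
  also have "\<dots> = (\<Sum>s\<in>y. (\<Sum>t\<in>y. (\<phi> s - 1) * (\<phi> t - 1) * (if s = t then \<tau>\<^sup>2 else 0))
                        + (\<Sum>t\<in>y. c s * c t * real (card (A s \<inter> A t)) * \<sigma> s t))"
    by (simp only: sum.distrib)
  also have "\<dots> = (\<Sum>s\<in>y. (1 - \<phi> s)\<^sup>2 * \<tau>\<^sup>2 + (\<Sum>t\<in>y. c s * c t * real (card (A s \<inter> A t)) * \<sigma> s t))"
  proof (rule sum.cong[OF refl])
    fix s assume s: "s \<in> y"
    have "(\<Sum>t\<in>y. (\<phi> s - 1) * (\<phi> t - 1) * (if s = t then \<tau>\<^sup>2 else 0))
        = (\<Sum>t\<in>y. if s = t then (\<phi> s - 1) * (\<phi> t - 1) * \<tau>\<^sup>2 else 0)"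
      by (rule sum.cong[OF refl]) simp
    also have "\<dots> = (\<phi> s - 1) * (\<phi> s - 1) * \<tau>\<^sup>2" using fy s by (simp only: sum.delta sum.delta' if_True)
    also have "\<dots> = (1 - \<phi> s)\<^sup>2 * \<tau>\<^sup>2" by (simp add: power2_eq_square algebra_simps)
    finally show "(\<Sum>t\<in>y. (\<phi> s - 1) * (\<phi> t - 1) * (if s = t then \<tau>\<^sup>2 else 0))
                        + (\<Sum>t\<in>y. c s * c t * real (card (A s \<inter> A t)) * \<sigma> s t)
        = (1 - \<phi> s)\<^sup>2 * \<tau>\<^sup>2 + (\<Sum>t\<in>y. c s * c t * real (card (A s \<inter> A t)) * \<sigma> s t)" by simp
  qed
  also have "\<dots> = (\<Sum>s\<in>y. (1 - \<phi> s)\<^sup>2 * \<tau>\<^sup>2) + (\<Sum>s\<in>y. \<Sum>t\<in>y. c s * c t * real (card (A s \<inter> A t)) * \<sigma> s t)"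
    by (simp only: sum.distrib)
  finally show ?thesis .
qed

end


lemma avg_split:
  fixes a :: "nat \<Rightarrow> real"
  assumes "finite B" "card B = 0 \<longrightarrow> p = 0"
  shows "(1 - p) * \<mu> + p * ((\<Sum>n\<in>B. th + a n) / real (card B))
       = (1 - p) * \<mu> + p * th + p / real (card B) * (\<Sum>n\<in>B. a n)"
proof (cases "card B = 0")
  case True then show ?thesis using assms by simp
next
  case False
  then show ?thesis by (simp add: sum.distrib field_simps)
qed

lemma block_eq:
  assumes "finite B" "card B = 0 \<longrightarrow> p = 0"
  shows "(1 - p) * real (card y) * \<mu> + p * ((\<Sum>n\<in>B. \<Sum>s\<in>y. obs \<theta> \<epsilon> n s \<omega>) / real (card B))
     = (\<Sum>s\<in>y. (1 - p) * \<mu> + p * \<theta> s \<omega> + p / real (card B) * (\<Sum>n\<in>B. \<epsilon> n s \<omega>))"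
proof -
  have "(1 - p) * real (card y) * \<mu> + p * ((\<Sum>n\<in>B. \<Sum>s\<in>y. obs \<theta> \<epsilon> n s \<omega>) / real (card B))
      = (\<Sum>s\<in>y. (1 - p) * \<mu> + p * ((\<Sum>n\<in>B. \<theta> s \<omega> + \<epsilon> n s \<omega>) / real (card B)))"
  proof -
    have e1: "(\<Sum>n\<in>B. \<Sum>s\<in>y. obs \<theta> \<epsilon> n s \<omega>) = (\<Sum>s\<in>y. \<Sum>n\<in>B. \<theta> s \<omega> + \<epsilon> n s \<omega>)"
      unfolding obs_def by (rule sum.swap)
    have e2: "(1 - p) * real (card y) * \<mu> = (\<Sum>s\<in>y. (1 - p) * \<mu>)" by simp
    have e3: "(\<Sum>s\<in>y. (1 - p) * \<mu> + p * ((\<Sum>n\<in>B. \<theta> s \<omega> + \<epsilon> n s \<omega>) / real (card B)))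
       = (\<Sum>s\<in>y. (1 - p) * \<mu>) + p * ((\<Sum>s\<in>y. \<Sum>n\<in>B. \<theta> s \<omega> + \<epsilon> n s \<omega>) / real (card B))"
      by (simp only: sum.distrib[of "\<lambda>s. (1 - p) * \<mu>"] sum_distrib_left sum_divide_distrib)
    show ?thesis unfolding e1 e2 by (rule e3[symmetric])
  qed
  also have "\<dots> = (\<Sum>s\<in>y. (1 - p) * \<mu> + p * \<theta> s \<omega> + p / real (card B) * (\<Sum>n\<in>B. \<epsilon> n s \<omega>))"
    by (intro sum.cong refl avg_split assms)
  finally show ?thesis .
qed

lemma ineq1:
  fixes p g a b k sg :: real
  assumes "0 < g" "g \<le> b" "0 \<le> k" "k \<le> a" "0 < a" "0 \<le> sg"
  shows "p / a * (p / b) * k * sg \<le> p / g * (p / g) * g * sg"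
proof -
  have b: "0 < b" using assms by linarith
  have "k / (a * b) \<le> 1 / b" using assms b by (simp add: field_simps mult_right_mono)
  also have "\<dots> \<le> 1 / g" using assms by (simp add: frac_le)
  finally have "k / (a * b) \<le> 1 / g" .
  then have "(p\<^sup>2 * sg) * (k / (a * b)) \<le> (p\<^sup>2 * sg) * (1 / g)"
    using assms by (intro mult_left_mono) auto
  moreover have "p / a * (p / b) * k * sg = (p\<^sup>2 * sg) * (k / (a * b))" by (simp add: power2_eq_square field_simps)
  moreover have "p / g * (p / g) * g * sg = (p\<^sup>2 * sg) * (1 / g)" using assms by (simp add: power2_eq_square field_simps)
  ultimately show ?thesis by linarith
qed



theorem proposition2p6:
  fixes M :: "'a measure" and S y :: "'seg set" and N :: nat and ys :: "nat \<Rightarrow> 'seg set"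
    and \<theta> :: "'seg \<Rightarrow> 'a \<Rightarrow> real" and \<epsilon> :: "nat \<Rightarrow> 'seg \<Rightarrow> 'a \<Rightarrow> real"
    and \<mu> \<tau> :: real and \<sigma> :: "'seg \<Rightarrow> 'seg \<Rightarrow> real"
  assumes model: "travel_model M S N ys \<theta> \<epsilon> \<mu> \<tau> \<sigma>"
    and route: "y \<noteq> {}" "y \<subseteq> S"
    and nonneg: "\<forall>s\<in>y. \<forall>t\<in>y. \<sigma> s t \<ge> 0"
  shows "opt_seg_risk M \<theta> \<epsilon> \<mu> N ys y \<le> opt_gseg_risk M \<theta> \<epsilon> \<mu> N ys y {y}
       \<and> opt_gseg_risk M \<theta> \<epsilon> \<mu> N ys y {y}
           \<le> opt_route_risk M \<theta> \<epsilon> \<mu> N ys y {r. \<exists>n<N. ys n = r \<and> r = y}"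
proof -
  interpret T: tm M S N ys \<theta> \<epsilon> \<mu> \<tau> \<sigma> by (rule tm.intro) (rule model)
  define A where "A s = {n. n < N \<and> s \<in> ys n}" for s
  define G where "G = {n. n < N \<and> y \<subseteq> ys n}"
  define \<delta> where "\<delta> = {r. \<exists>n<N. ys n = r \<and> r = y}"
  define R where "R = {n. n < N \<and> ys n \<in> \<delta>}"
  have R_eq: "R = {n. n < N \<and> ys n = y}" by (auto simp: R_def \<delta>_def)
  have RG: "R \<subseteq> G" by (auto simp: R_eq G_def)
  have fG: "finite G" by (rule finite_subset[of _ "{..<N}"]) (auto simp: G_def)
  have fR: "finite R" using RG fG by (rule finite_subset)
  have fA: "finite (A s)" for s by (rule finite_subset[of _ "{..<N}"]) (auto simp: A_def)
  have GA: "s \<in> y \<Longrightarrow> G \<subseteq> A s" for s by (auto simp: G_def A_def)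
  define Q where "Q p c B = (\<Sum>s\<in>y. (1 - p s)\<^sup>2 * \<tau>\<^sup>2) + (\<Sum>s\<in>y. \<Sum>t\<in>y. c s * c t * real (card (B s \<inter> B t)) * \<sigma> s t)"
    for p c :: "'seg \<Rightarrow> real" and B :: "'seg \<Rightarrow> nat set"
  have risk_nonneg: "0 \<le> risk M \<theta> y f" for f
    unfolding risk_def by (rule Bochner_Integration.integral_nonneg) simp
  have seg_risk: "risk M \<theta> y (seg_est N ys (obs \<theta> \<epsilon>) \<mu> y \<phi>) = Q \<phi> (\<lambda>s. \<phi> s / real (card (A s))) A"
    if c: "\<forall>s\<in>y. N_seg N ys s = 0 \<longrightarrow> \<phi> s = 0" for \<phi>
  proof -
    have "seg_est N ys (obs \<theta> \<epsilon>) \<mu> y \<phi> = (\<lambda>\<omega>. \<Sum>s\<in>y. (1 - \<phi> s) * \<mu> + \<phi> s * \<theta> s \<omega>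
            + \<phi> s / real (card (A s)) * (\<Sum>n\<in>A s. \<epsilon> n s \<omega>))"
    proof
      fix \<omega> show "seg_est N ys (obs \<theta> \<epsilon>) \<mu> y \<phi> \<omega> = (\<Sum>s\<in>y. (1 - \<phi> s) * \<mu> + \<phi> s * \<theta> s \<omega>
            + \<phi> s / real (card (A s)) * (\<Sum>n\<in>A s. \<epsilon> n s \<omega>))"
        unfolding seg_est_def obs_def N_seg_def A_def[symmetric]
      proof (rule sum.cong[OF refl])
        fix s assume s: "s \<in> y"
        have "card (A s) = 0 \<longrightarrow> \<phi> s = 0" using c s by (simp add: N_seg_def A_def)
        then show "(1 - \<phi> s) * \<mu> + \<phi> s * ((\<Sum>n\<in>A s. \<theta> s \<omega> + \<epsilon> n s \<omega>) / real (card (A s))) =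
          (1 - \<phi> s) * \<mu> + \<phi> s * \<theta> s \<omega> + \<phi> s / real (card (A s)) * (\<Sum>n\<in>A s. \<epsilon> n s \<omega>)"
          by (rule avg_split[OF fA])
      qed
    qed
    note e = this
    show ?thesis unfolding Q_def e
      by (rule T.risk_formula[OF route(2)]) (auto simp: A_def)
  qed
  have block_risk: "risk M \<theta> y (\<lambda>\<omega>. (1 - p) * real (card y) * \<mu> + p * ((\<Sum>n\<in>B. \<Sum>s\<in>y. obs \<theta> \<epsilon> n s \<omega>) / real (card B)))
      = Q (\<lambda>_. p) (\<lambda>_. p / real (card B)) (\<lambda>_. B)"
    if B: "B \<subseteq> G" "card B = 0 \<longrightarrow> p = 0" for B p
  proof -
    have fB: "finite B" using B fG finite_subset by blast
    show ?thesis
      unfolding block_eq[OF fB B(2)] Q_def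
    proof (rule T.risk_formula[OF route(2)])
      show "\<forall>s\<in>y. B \<subseteq> {n. n < N \<and> s \<in> ys n}" using B(1) by (auto simp: G_def)
    qed
  qed
  have gseg_risk: "risk M \<theta> y (gseg_est N ys (obs \<theta> \<epsilon>) \<mu> {y} \<phi>) = Q (\<lambda>_. \<phi> y) (\<lambda>_. \<phi> y / real (card G)) (\<lambda>_. G)"
    if c: "N_set N ys y = 0 \<longrightarrow> \<phi> y = 0" for \<phi>
  proof -
    have "gseg_est N ys (obs \<theta> \<epsilon>) \<mu> {y} \<phi> = (\<lambda>\<omega>. (1 - \<phi> y) * real (card y) * \<mu> + \<phi> y * ((\<Sum>n\<in>G. \<Sum>s\<in>y. obs \<theta> \<epsilon> n s \<omega>) / real (card G)))"
      by (simp add: gseg_est_def N_set_def G_def fun_eq_iff)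
    then show ?thesis using block_risk[of G "\<phi> y"] c by (simp add: N_set_def G_def)
  qed
  have route_risk: "risk M \<theta> y (route_est N ys (obs \<theta> \<epsilon>) \<mu> y \<delta> q) = Q (\<lambda>_. q) (\<lambda>_. q / real (card R)) (\<lambda>_. R)"
    if c: "card R = 0 \<longrightarrow> q = 0" for q
  proof -
    have "route_est N ys (obs \<theta> \<epsilon>) \<mu> y \<delta> q = (\<lambda>\<omega>. (1 - q) * real (card y) * \<mu> + q * ((\<Sum>n\<in>R. \<Sum>s\<in>y. obs \<theta> \<epsilon> n s \<omega>) / real (card R)))"
    proof
      fix \<omega>
      have "(\<Sum>n\<in>R. \<Sum>s\<in>ys n. obs \<theta> \<epsilon> n s \<omega>) = (\<Sum>n\<in>R. \<Sum>s\<in>y. obs \<theta> \<epsilon> n s \<omega>)"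
        by (rule sum.cong) (auto simp: R_eq)
      then show "route_est N ys (obs \<theta> \<epsilon>) \<mu> y \<delta> q \<omega> = (1 - q) * real (card y) * \<mu> + q * ((\<Sum>n\<in>R. \<Sum>s\<in>y. obs \<theta> \<epsilon> n s \<omega>) / real (card R))"
        unfolding route_est_def R_def[symmetric] by simp
    qed
    then show ?thesis using block_risk[OF RG c] by simp
  qed
  have I1: "opt_seg_risk M \<theta> \<epsilon> \<mu> N ys y \<le> opt_gseg_risk M \<theta> \<epsilon> \<mu> N ys y {y}"
    unfolding opt_seg_risk_def opt_gseg_risk_def
  proof (rule cInf_mono)
    show "{risk M \<theta> y (gseg_est N ys (obs \<theta> \<epsilon>) \<mu> {y} \<phi>) |\<phi>. \<forall>S\<in>{y}. N_set N ys S = 0 \<longrightarrow> \<phi> S = 0} \<noteq> {}"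
    proof -
      have "risk M \<theta> y (gseg_est N ys (obs \<theta> \<epsilon>) \<mu> {y} (\<lambda>_. 0)) \<in>
        {risk M \<theta> y (gseg_est N ys (obs \<theta> \<epsilon>) \<mu> {y} \<phi>) |\<phi>. \<forall>S\<in>{y}. N_set N ys S = 0 \<longrightarrow> \<phi> S = 0}"
        by (rule CollectI, rule exI[of _ "\<lambda>_. 0"]) simp
      then show ?thesis by blast
    qed
    show "bdd_below {risk M \<theta> y (seg_est N ys (obs \<theta> \<epsilon>) \<mu> y \<phi>) |\<phi>. \<forall>s\<in>y. N_seg N ys s = 0 \<longrightarrow> \<phi> s = 0}"
      by (rule bdd_belowI[of _ 0]) (use risk_nonneg in auto)
    fix b assume "b \<in> {risk M \<theta> y (gseg_est N ys (obs \<theta> \<epsilon>) \<mu> {y} \<phi>) |\<phi>. \<forall>S\<in>{y}. N_set N ys S = 0 \<longrightarrow> \<phi> S = 0}"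
    then obtain \<phi> where b: "b = risk M \<theta> y (gseg_est N ys (obs \<theta> \<epsilon>) \<mu> {y} \<phi>)" and c: "N_set N ys y = 0 \<longrightarrow> \<phi> y = 0"
      by auto
    define p where "p = \<phi> y"
    have cG: "card G = 0 \<longrightarrow> p = 0" using c by (simp add: p_def N_set_def G_def)
    have cs: "\<forall>s\<in>y. N_seg N ys s = 0 \<longrightarrow> (\<lambda>_. p) s = 0"
    proof (intro ballI impI)
      fix s assume s: "s \<in> y" "N_seg N ys s = 0"
      then have "A s = {}" using fA by (simp add: N_seg_def A_def[symmetric])
      then have "G = {}" using GA[OF s(1)] by auto
      then show "(\<lambda>_. p) s = 0" using cG by simp
    qed
    have Qle: "Q (\<lambda>_. p) (\<lambda>s. p / real (card (A s))) A \<le> Q (\<lambda>_. p) (\<lambda>_. p / real (card G)) (\<lambda>_. G)"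
      unfolding Q_def
    proof (intro add_left_mono sum_mono)
      fix s t assume st: "s \<in> y" "t \<in> y"
      show "p / real (card (A s)) * (p / real (card (A t))) * real (card (A s \<inter> A t)) * \<sigma> s t
          \<le> p / real (card G) * (p / real (card G)) * real (card (G \<inter> G)) * \<sigma> s t"
      proof (cases "card G = 0")
        case True then show ?thesis using cG by simp
      next
        case False
        have g1: "card G \<le> card (A t)" "card G \<le> card (A s)"
          by (rule card_mono[OF fA GA[OF st(2)]], rule card_mono[OF fA GA[OF st(1)]])
        have k: "card (A s \<inter> A t) \<le> card (A s)" by (rule card_mono[OF fA Int_lower1])
        show ?thesis
        proof (simp only: Int_absorb, rule ineq1)
          show "0 < real (card G)" using False by simp
          show "real (card G) \<le> real (card (A t))" using g1 by simp
          show "0 \<le> real (card (A s \<inter> A t))" by simp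
          show "real (card (A s \<inter> A t)) \<le> real (card (A s))" using k by simp
          show "0 < real (card (A s))" using False g1 by simp
          show "0 \<le> \<sigma> s t" using nonneg st by blast
        qed
      qed
    qed
    show "\<exists>a\<in>{risk M \<theta> y (seg_est N ys (obs \<theta> \<epsilon>) \<mu> y \<phi>) |\<phi>. \<forall>s\<in>y. N_seg N ys s = 0 \<longrightarrow> \<phi> s = 0}. a \<le> b"
    proof (rule bexI)
      show "risk M \<theta> y (seg_est N ys (obs \<theta> \<epsilon>) \<mu> y (\<lambda>_. p)) \<le> b"
        unfolding b seg_risk[of "\<lambda>_. p", OF cs] gseg_risk[of \<phi>, OF c] p_def[symmetric] by (rule Qle)
      show "risk M \<theta> y (seg_est N ys (obs \<theta> \<epsilon>) \<mu> y (\<lambda>_. p)) \<in> {risk M \<theta> y (seg_est N ys (obs \<theta> \<epsilon>) \<mu> y \<phi>) |\<phi>. \<forall>s\<in>y. N_seg N ys s = 0 \<longrightarrow> \<phi> s = 0}"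
        by (rule CollectI, rule exI[of _ "\<lambda>_. p"], rule conjI[OF refl cs])
    qed
  qed
  have I2: "opt_gseg_risk M \<theta> \<epsilon> \<mu> N ys y {y} \<le> opt_route_risk M \<theta> \<epsilon> \<mu> N ys y \<delta>"
    unfolding opt_route_risk_def opt_gseg_risk_def R_def[symmetric]
  proof (rule cInf_mono)
    show "{risk M \<theta> y (route_est N ys (obs \<theta> \<epsilon>) \<mu> y \<delta> \<phi>) |\<phi>. card R = 0 \<longrightarrow> \<phi> = 0} \<noteq> {}"
    proof -
      have "risk M \<theta> y (route_est N ys (obs \<theta> \<epsilon>) \<mu> y \<delta> 0) \<in>
        {risk M \<theta> y (route_est N ys (obs \<theta> \<epsilon>) \<mu> y \<delta> \<phi>) |\<phi>. card R = 0 \<longrightarrow> \<phi> = 0}"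
        by (rule CollectI, rule exI[of _ 0]) simp
      then show ?thesis by blast
    qed
    show "bdd_below {risk M \<theta> y (gseg_est N ys (obs \<theta> \<epsilon>) \<mu> {y} \<phi>) |\<phi>. \<forall>S\<in>{y}. N_set N ys S = 0 \<longrightarrow> \<phi> S = 0}"
      by (rule bdd_belowI[of _ 0]) (use risk_nonneg in auto)
    fix b assume "b \<in> {risk M \<theta> y (route_est N ys (obs \<theta> \<epsilon>) \<mu> y \<delta> \<phi>) |\<phi>. card R = 0 \<longrightarrow> \<phi> = 0}"
    then obtain q where b: "b = risk M \<theta> y (route_est N ys (obs \<theta> \<epsilon>) \<mu> y \<delta> q)" and c: "card R = 0 \<longrightarrow> q = 0"
      by auto
    have cs: "N_set N ys y = 0 \<longrightarrow> (\<lambda>_. q) y = 0"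
    proof
      assume "N_set N ys y = 0"
      then have "G = {}" using fG by (simp add: N_set_def G_def[symmetric])
      then have "R = {}" using RG by auto
      then show "(\<lambda>_. q) y = 0" using c by simp
    qed
    have Qle: "Q (\<lambda>_. q) (\<lambda>_. q / real (card G)) (\<lambda>_. G) \<le> Q (\<lambda>_. q) (\<lambda>_. q / real (card R)) (\<lambda>_. R)"
      unfolding Q_def
    proof (intro add_left_mono sum_mono)
      fix s t assume st: "s \<in> y" "t \<in> y"
      show "q / real (card G) * (q / real (card G)) * real (card (G \<inter> G)) * \<sigma> s t
          \<le> q / real (card R) * (q / real (card R)) * real (card (R \<inter> R)) * \<sigma> s t"
      proof (cases "card R = 0")
        case True then show ?thesis using c by simp
      next
        case False
        have g1: "card R \<le> card G" by (rule card_mono[OF fG RG])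
        show ?thesis
        proof (simp only: Int_absorb, rule ineq1)
          show "0 < real (card R)" using False by simp
          show "real (card R) \<le> real (card G)" using g1 by simp
          show "0 \<le> real (card G)" by simp
          show "real (card G) \<le> real (card G)" by simp
          show "0 < real (card G)" using False g1 by simp
          show "0 \<le> \<sigma> s t" using nonneg st by blast
        qed
      qed
    qed
    show "\<exists>a\<in>{risk M \<theta> y (gseg_est N ys (obs \<theta> \<epsilon>) \<mu> {y} \<phi>) |\<phi>. \<forall>S\<in>{y}. N_set N ys S = 0 \<longrightarrow> \<phi> S = 0}. a \<le> b"
    proof (rule bexI)
      show "risk M \<theta> y (gseg_est N ys (obs \<theta> \<epsilon>) \<mu> {y} (\<lambda>_. q)) \<le> b"
        unfolding b gseg_risk[of "\<lambda>_. q", OF cs] route_risk[of q, OF c] by (rule Qle)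
      show "risk M \<theta> y (gseg_est N ys (obs \<theta> \<epsilon>) \<mu> {y} (\<lambda>_. q)) \<in> {risk M \<theta> y (gseg_est N ys (obs \<theta> \<epsilon>) \<mu> {y} \<phi>) |\<phi>. \<forall>S\<in>{y}. N_set N ys S = 0 \<longrightarrow> \<phi> S = 0}"
        using cs by (intro CollectI exI[of _ "\<lambda>_. q"]) simp
    qed
  qed
  show ?thesis using I1 I2 unfolding \<delta>_def by simp
qed

end
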